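(* (a) Let $\mathbf{x}=(x_s)\in(\mathbb{C}^* )^{\mathbb{Z}^3}$ be a coherent solution of the Kashaev equation such that $x_vx_{v+e_i+e_j}+x_{v+e_i}x_{v+e_j}\neq0$ for all $v\in\mathbb{Z}^3$ and all distinct $i,j\in\{1,2,3\}$ (where $e_1,e_2,e_3$ are the standard basis vectors). Then $\mathbf{x}$ can be extended to an array $\tilde{\mathbf{x}}=(x_s)\in\mathbb{C}^L$ satisfying the K-hexahedron equations. (b) Conversely, if $\tilde{\mathbf{x}}=(x_s)\in\mathbb{C}^L$, with $x_s\neq0$ for all $s\in\mathbb{Z}^3$, satisfies the K-hexahedron equations, then the restriction of $\tilde{\mathbf{x}}$ to $\mathbb{Z}^3$ is a coherent solution of the Kashaev equation.
   Context: For a unit cube $C$ in $\mathbb{Z}^3$ and $\mathbf{x}\in\mathbb{C}^{\mathbb{Z}^3}$, label the values at the vertices of $C$ as $z_{ijk}$ ($i,j,k\in\{0,1\}$) via a cube isomorphism $C\cong\{0,1\}^3$; put $a=z_{000}z_{111}$, $b=z_{100}z_{011}$, $c=z_{010}z_{101}$, $d=z_{001}z_{110}$, $s=z_{000}z_{011}z_{101}z_{110}$, $t=z_{111}z_{100}z_{010}z_{001}$ and $K^C(\mathbf{x})=2(a^2+b^2+c^2+d^2)-(a+b+c+d)^2-4(s+t)$. For a vertex $v$ of $C$, choosing the labeling with $z_{000}=x_v$, set $K^C_v(\mathbf{x})=\tfrac12\big(z_{111}z_{000}^2-z_{000}(z_{100}z_{011}+z_{010}z_{101}+z_{001}z_{110})\big)-z_{100}z_{010}z_{001}$.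 An array $\mathbf{x}\in\mathbb{C}^{\mathbb{Z}^3}$ is a coherent solution of the Kashaev equation if $K^C(\mathbf{x})=0$ for every unit cube $C$ and, for every $v\in\mathbb{Z}^3$, $\prod_{C\ni v}K^C_v(\mathbf{x})=\prod_{S\ni v}(x_vx_{v_2}+x_{v_1}x_{v_3})$, the first product over the $8$ unit cubes containing $v$, the second over the $12$ unit squares $S$ containing $v$, with $v,v_1,v_2,v_3$ the vertices of $S$ in cyclic order. $L=\{(i,j,k)\in\mathbb{R}^3: 2i,2j,2k,i+j+k\in\mathbb{Z}\}=\mathbb{Z}^3+\{(0,0,0),(0,\tfrac12,\tfrac12),(\tfrac12,0,\tfrac12),(\tfrac12,\tfrac12,0)\}$, i.e. $\mathbb{Z}^3$ together with the centers of unit squares. An array $\tilde{\mathbf{x}}=(x_s)\in\mathbb{C}^L$ with $x_s\ne0$ for $s\in\mathbb{Z}^3$ satisfies the K-hexahedron equations if (i) for every $s\in L\setminus\mathbb{Z}^3$, $x_s^2=x_{v_1}x_{v_3}+x_{v_2}x_{v_4}$, where $v_1,v_2,v_3,v_4$ are the vertices, in cyclic order, of the unit square centered at $s$; and (ii) for every $v\in\mathbb{Z}^3$, writing $z_{ijk}=x_{v+(i,j,k)}$, $z_{1\frac12\frac12}=(z_{\frac120\frac12}z_{\frac12\frac120}+z_{0\frac12\frac12}z_{100})/z_{000}$, $z_{\frac121\frac12}=(z_{0\frac12\frac12}z_{\frac12\frac120}+z_{\frac120\frac12}z_{010})/z_{000}$, $z_{\frac12\frac121}=(z_{0\frac12\frac12}z_{\frac120\frac12}+z_{\frac12\frac120}z_{001})/z_{000}$,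 $z_{111}=(A+2z_{0\frac12\frac12}z_{\frac120\frac12}z_{\frac12\frac120})/z_{000}^2$, where $A=2z_{100}z_{010}z_{001}+z_{000}(z_{100}z_{011}+z_{010}z_{101}+z_{001}z_{110})$. *)

theory Defs
  imports Complex_Main
begin

type_synonym pt = "int \<times> int \<times> int"

definition shift :: "pt \<Rightarrow> pt \<Rightarrow> pt" where
  "shift v d = (fst v + fst d, fst (snd v) + fst (snd d), snd (snd v) + snd (snd d))"

definition e :: "nat \<Rightarrow> pt" where
  "e i = (if i = 1 then (1,0,0) else if i = 2 then (0,1,0) else (0,0,1))"

definition Kcube :: "(pt \<Rightarrow> complex) \<Rightarrow> pt \<Rightarrow> complex" where
  "Kcube x w =
    (let z = (\<lambda>i j k. x (shift w (i,j,k)));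
         a = z 0 0 0 * z 1 1 1; b = z 1 0 0 * z 0 1 1;
         c = z 0 1 0 * z 1 0 1; d = z 0 0 1 * z 1 1 0;
         s = z 0 0 0 * z 0 1 1 * z 1 0 1 * z 1 1 0;
         t = z 1 1 1 * z 1 0 0 * z 0 1 0 * z 0 0 1
     in 2 * (a^2 + b^2 + c^2 + d^2) - (a + b + c + d)^2 - 4 * (s + t))"

(* K^C_v for the unit cube C = {v + (s1 i, s2 j, s3 k) : i,j,k \<in> {0,1}} containing v,
   labeled with z_000 = x_v *)
definition Kvert :: "(pt \<Rightarrow> complex) \<Rightarrow> pt \<Rightarrow> pt \<Rightarrow> complex" where
  "Kvert x v \<sigma> =
    (let z = (\<lambda>i j k. x (shift v (fst \<sigma> * i, fst (snd \<sigma>) * j, snd (snd \<sigma>) * k)))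
     in (1/2) * (z 1 1 1 * (z 0 0 0)^2
                 - z 0 0 0 * (z 1 0 0 * z 0 1 1 + z 0 1 0 * z 1 0 1 + z 0 0 1 * z 1 1 0))
        - z 1 0 0 * z 0 1 0 * z 0 0 1)"

(* sign vectors: the 8 unit cubes containing a vertex *)
definition signs :: "pt set" where
  "signs = {-1,1} \<times> {-1,1} \<times> {-1,1}"

(* the 12 unit squares containing a vertex v: vertices v, v+d1, v+d1+d2, v+d2 (cyclic) *)
definition sq_dirs :: "(pt \<times> pt) set" where
  "sq_dirs =
     (\<lambda>(s,t). ((s,0,0),(0,t,0))) ` ({-1,1} \<times> {-1,1})
   \<union> (\<lambda>(s,t). ((s,0,0),(0,0,t))) ` ({-1,1} \<times> {-1,1})
   \<union> (\<lambda>(s,t). ((0,s,0),(0,0,t))) ` ({-1,1} \<times> {-1,1})"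

definition coherent :: "(pt \<Rightarrow> complex) \<Rightarrow> bool" where
  "coherent x \<longleftrightarrow>
     (\<forall>w. Kcube x w = 0) \<and>
     (\<forall>v. (\<Prod>\<sigma>\<in>signs. Kvert x v \<sigma>) =
          (\<Prod>d\<in>sq_dirs. x v * x (shift (shift v (fst d)) (snd d))
                          + x (shift v (fst d)) * x (shift v (snd d))))"

(* The lattice L is encoded in doubled coordinates: the point (i,j,k) \<in> L is stored
   as (2i,2j,2k) \<in> Z^3, so L corresponds to triples with even coordinate sum and
   Z^3 \<subseteq> L to triples with all coordinates even.  dbl v is the image of v \<in> Z^3. *)
definition dbl :: "pt \<Rightarrow> pt" where
  "dbl v = (2 * fst v, 2 * fst (snd v), 2 * snd (snd v))"

definition K_hexahedron :: "(pt \<Rightarrow> complex) \<Rightarrow> bool" where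
  "K_hexahedron xt \<longleftrightarrow>
     (\<forall>v. xt (dbl v) \<noteq> 0) \<and>
     \<comment> \<open>(i) face centers: exactly one doubled coordinate is even\<close>
     (\<forall>a b c. even a \<and> odd b \<and> odd c \<longrightarrow>
        (xt (a,b,c))^2 = xt (a,b-1,c-1) * xt (a,b+1,c+1) + xt (a,b+1,c-1) * xt (a,b-1,c+1)) \<and>
     (\<forall>a b c. odd a \<and> even b \<and> odd c \<longrightarrow>
        (xt (a,b,c))^2 = xt (a-1,b,c-1) * xt (a+1,b,c+1) + xt (a+1,b,c-1) * xt (a-1,b,c+1)) \<and>
     (\<forall>a b c. odd a \<and> odd b \<and> even c \<longrightarrow>
        (xt (a,b,c))^2 = xt (a-1,b-1,c) * xt (a+1,b+1,c) + xt (a+1,b-1,c) * xt (a-1,b+1,c)) \<and>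
     \<comment> \<open>(ii) with z p q r = x_{v + (p/2, q/2, r/2)}\<close>
     (\<forall>v. let z = (\<lambda>p q r. xt (shift (dbl v) (p,q,r)));
              A = 2 * z 2 0 0 * z 0 2 0 * z 0 0 2
                  + z 0 0 0 * (z 2 0 0 * z 0 2 2 + z 0 2 0 * z 2 0 2 + z 0 0 2 * z 2 2 0)
          in z 2 1 1 = (z 1 0 1 * z 1 1 0 + z 0 1 1 * z 2 0 0) / z 0 0 0 \<and>
             z 1 2 1 = (z 0 1 1 * z 1 1 0 + z 1 0 1 * z 0 2 0) / z 0 0 0 \<and>
             z 1 1 2 = (z 0 1 1 * z 1 0 1 + z 1 1 0 * z 0 0 2) / z 0 0 0 \<and>
             z 2 2 2 = (A + 2 * z 0 1 1 * z 1 0 1 * z 1 1 0) / (z 0 0 0)^2)"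

end

theory Submission
  imports Defs
begin


definition kv :: "complex \<Rightarrow> complex \<Rightarrow> complex \<Rightarrow> complex \<Rightarrow> complex \<Rightarrow> complex \<Rightarrow> complex \<Rightarrow> complex \<Rightarrow> complex" where
 "kv z000 z100 z010 z001 z011 z101 z110 z111 =
   (1/2) * (z111 * z000^2 - z000 * (z100 * z011 + z010 * z101 + z001 * z110)) - z100 * z010 * z001"

lemma alg_core:
  fixes z000 z100 z010 z001 z011 z101 z110 z111 f1 f2 f3 g1 g2 g3 :: complex
  assumes nz: "z000 \<noteq> 0"
  and h1: "f1^2 = z000*z011 + z010*z001"
  and h2: "f2^2 = z000*z101 + z100*z001"
  and h3: "f3^2 = z000*z110 + z100*z010"
  and hK: "f1*f2*f3 = kv z000 z100 z010 z001 z011 z101 z110 z111"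
  and hg1: "g1 * z000 = f2*f3 + f1*z100"
  and hg2: "g2 * z000 = f1*f3 + f2*z010"
  and hg3: "g3 * z000 = f1*f2 + f3*z001"
  shows "kv z000 z100 z010 z001 z011 z101 z110 z111 = f1 * f2 * f3"
 and "kv z001 z101 z011 z000 z010 z100 z111 z110 = - f1 * f2 * g3"
 and "kv z010 z110 z000 z011 z001 z111 z100 z101 = - f1 * g2 * f3"
 and "kv z011 z111 z001 z010 z000 z110 z101 z100 = - f1 * g2 * g3"
 and "kv z100 z000 z110 z101 z111 z001 z010 z011 = - g1 * f2 * f3"
 and "kv z101 z001 z111 z100 z110 z000 z011 z010 = - g1 * f2 * g3"
 and "kv z110 z010 z100 z111 z101 z011 z000 z001 = - g1 * g2 * f3"
 and "kv z111 z011 z101 z110 z100 z010 z001 z000 = g1 * g2 * g3"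
 and "g1^2 = z100*z111 + z110*z101"
 and "g2^2 = z010*z111 + z110*z011"
 and "g3^2 = z001*z111 + z101*z011"
proof -
  have e011: "z011 = (f1^2 - z010*z001)/z000" using h1 nz by (simp add: field_simps)
  have e101: "z101 = (f2^2 - z100*z001)/z000" using h2 nz by (simp add: field_simps)
  have e110: "z110 = (f3^2 - z100*z010)/z000" using h3 nz by (simp add: field_simps)
  have eg1: "g1 = (f2*f3 + f1*z100)/z000" using hg1 nz by (simp add: field_simps)
  have eg2: "g2 = (f1*f3 + f2*z010)/z000" using hg2 nz by (simp add: field_simps)
  have eg3: "g3 = (f1*f2 + f3*z001)/z000" using hg3 nz by (simp add: field_simps)
  have e111: "z111 = (2*z100*z010*z001 + z000*(z100*z011+z010*z101+z001*z110) + 2*f1*f2*f3)/z000^2"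
    using hK nz unfolding kv_def by (simp add: field_simps)
  show "kv z000 z100 z010 z001 z011 z101 z110 z111 = f1 * f2 * f3" using hK by simp
  show "kv z001 z101 z011 z000 z010 z100 z111 z110 = - f1 * f2 * g3"
    unfolding kv_def e111 eg1 eg2 eg3 e011 e101 e110 using nz by (simp add: divide_simps) (simp add: algebra_simps power2_eq_square power3_eq_cube)
  show "kv z010 z110 z000 z011 z001 z111 z100 z101 = - f1 * g2 * f3"
    unfolding kv_def e111 eg1 eg2 eg3 e011 e101 e110 using nz by (simp add: divide_simps) (simp add: algebra_simps power2_eq_square power3_eq_cube)
  show "kv z011 z111 z001 z010 z000 z110 z101 z100 = - f1 * g2 * g3"
    unfolding kv_def e111 eg1 eg2 eg3 e011 e101 e110 using nz by (simp add: divide_simps) (simp add: algebra_simps power2_eq_square power3_eq_cube)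
  show "kv z100 z000 z110 z101 z111 z001 z010 z011 = - g1 * f2 * f3"
    unfolding kv_def e111 eg1 eg2 eg3 e011 e101 e110 using nz by (simp add: divide_simps) (simp add: algebra_simps power2_eq_square power3_eq_cube)
  show "kv z101 z001 z111 z100 z110 z000 z011 z010 = - g1 * f2 * g3"
    unfolding kv_def e111 eg1 eg2 eg3 e011 e101 e110 using nz by (simp add: divide_simps) (simp add: algebra_simps power2_eq_square power3_eq_cube)
  show "kv z110 z010 z100 z111 z101 z011 z000 z001 = - g1 * g2 * f3"
    unfolding kv_def e111 eg1 eg2 eg3 e011 e101 e110 using nz by (simp add: divide_simps) (simp add: algebra_simps power2_eq_square power3_eq_cube)
  show "kv z111 z011 z101 z110 z100 z010 z001 z000 = g1 * g2 * g3"
    using h1 h2 h3 hK hg1 hg2 hg3 nz unfolding kv_def by algebra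
  show "g1^2 = z100*z111 + z110*z101"
    unfolding kv_def e111 eg1 eg2 eg3 e011 e101 e110 using nz by (simp add: divide_simps) (simp add: algebra_simps power2_eq_square power3_eq_cube)
  show "g2^2 = z010*z111 + z110*z011"
    unfolding kv_def e111 eg1 eg2 eg3 e011 e101 e110 using nz by (simp add: divide_simps) (simp add: algebra_simps power2_eq_square power3_eq_cube)
  show "g3^2 = z001*z111 + z101*z011"
    unfolding kv_def e111 eg1 eg2 eg3 e011 e101 e110 using nz by (simp add: divide_simps) (simp add: algebra_simps power2_eq_square power3_eq_cube)
qed


lemma Kvert_eq: "Kvert x (a,b,c) (p,q,r) = kv (x(a,b,c)) (x(a+p,b,c)) (x(a,b+q,c)) (x(a,b,c+r))
   (x(a,b+q,c+r)) (x(a+p,b,c+r)) (x(a+p,b+q,c)) (x(a+p,b+q,c+r))"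
  by (simp add: Kvert_def kv_def shift_def Let_def)

definition sqx :: "(pt \<Rightarrow> complex) \<Rightarrow> pt \<Rightarrow> complex" where
  "sqx x w = (case w of (a,b,c) \<Rightarrow> x(a,b,c)*x(a,b+1,c+1) + x(a,b+1,c)*x(a,b,c+1))"
definition sqy :: "(pt \<Rightarrow> complex) \<Rightarrow> pt \<Rightarrow> complex" where
  "sqy x w = (case w of (a,b,c) \<Rightarrow> x(a,b,c)*x(a+1,b,c+1) + x(a+1,b,c)*x(a,b,c+1))"
definition sqz :: "(pt \<Rightarrow> complex) \<Rightarrow> pt \<Rightarrow> complex" where
  "sqz x w = (case w of (a,b,c) \<Rightarrow> x(a,b,c)*x(a+1,b+1,c) + x(a+1,b,c)*x(a,b+1,c))"
definition Kmin :: "(pt \<Rightarrow> complex) \<Rightarrow> pt \<Rightarrow> complex" where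
  "Kmin x w = Kvert x w (1,1,1)"

lemma sq_simps:
  "sqx x (a,b,c) = x(a,b,c)*x(a,b+1,c+1) + x(a,b+1,c)*x(a,b,c+1)"
  "sqy x (a,b,c) = x(a,b,c)*x(a+1,b,c+1) + x(a+1,b,c)*x(a,b,c+1)"
  "sqz x (a,b,c) = x(a,b,c)*x(a+1,b+1,c) + x(a+1,b,c)*x(a,b+1,c)"
  by (simp_all add: sqx_def sqy_def sqz_def)

lemma Kmin_eq: "Kmin x (a,b,c) = kv (x(a,b,c)) (x(a+1,b,c)) (x(a,b+1,c)) (x(a,b,c+1))
   (x(a,b+1,c+1)) (x(a+1,b,c+1)) (x(a+1,b+1,c)) (x(a+1,b+1,c+1))"
  by (simp add: Kmin_def Kvert_eq)

lemma cube_loc: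
  fixes x :: "pt \<Rightarrow> complex" and f1 f2 f3 g1 g2 g3 :: complex
  assumes nz: "x(a,b,c) \<noteq> 0"
  and A1: "f1^2 = sqx x (a,b,c)" and A2: "f2^2 = sqy x (a,b,c)" and A3: "f3^2 = sqz x (a,b,c)"
  and B: "f1*f2*f3 = Kmin x (a,b,c)"
  and C1: "g1 * x(a,b,c) = f2*f3 + f1*x(a+1,b,c)"
  and C2: "g2 * x(a,b,c) = f1*f3 + f2*x(a,b+1,c)"
  and C3: "g3 * x(a,b,c) = f1*f2 + f3*x(a,b,c+1)"
  shows "Kvert x (a,b,c) (1,1,1) = f1 * f2 * f3"
    and "Kvert x (a,b,c+1) (1,1,-1) = - f1 * f2 * g3"
    and "Kvert x (a,b+1,c) (1,-1,1) = - f1 * g2 * f3"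
    and "Kvert x (a,b+1,c+1) (1,-1,-1) = - f1 * g2 * g3"
    and "Kvert x (a+1,b,c) (-1,1,1) = - g1 * f2 * f3"
    and "Kvert x (a+1,b,c+1) (-1,1,-1) = - g1 * f2 * g3"
    and "Kvert x (a+1,b+1,c) (-1,-1,1) = - g1 * g2 * f3"
    and "Kvert x (a+1,b+1,c+1) (-1,-1,-1) = g1 * g2 * g3"
    and "g1^2 = sqx x (a+1,b,c)"
    and "g2^2 = sqy x (a,b+1,c)"
    and "g3^2 = sqz x (a,b,c+1)"
proof -
  note AC = alg_core[OF nz, of f1 "x(a,b+1,c+1)" "x(a,b+1,c)" "x(a,b,c+1)" f2 "x(a+1,b,c+1)" "x(a+1,b,c)"
      f3 "x(a+1,b+1,c)" "x(a+1,b+1,c+1)" g1 g2 g3]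
  have H: "f1^2 = x(a,b,c)*x(a,b+1,c+1) + x(a,b+1,c)*x(a,b,c+1)"
     "f2^2 = x(a,b,c)*x(a+1,b,c+1) + x(a+1,b,c)*x(a,b,c+1)"
     "f3^2 = x(a,b,c)*x(a+1,b+1,c) + x(a+1,b,c)*x(a,b+1,c)"
     "f1*f2*f3 = kv (x(a,b,c)) (x(a+1,b,c)) (x(a,b+1,c)) (x(a,b,c+1))
        (x(a,b+1,c+1)) (x(a+1,b,c+1)) (x(a+1,b+1,c)) (x(a+1,b+1,c+1))"
    using A1 A2 A3 B by (simp_all add: sq_simps Kmin_eq)
  note R = AC[OF H C1 C2 C3]
  show "Kvert x (a,b,c) (1,1,1) = f1 * f2 * f3"
    and "Kvert x (a,b,c+1) (1,1,-1) = - f1 * f2 * g3"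
    and "Kvert x (a,b+1,c) (1,-1,1) = - f1 * g2 * f3"
    and "Kvert x (a,b+1,c+1) (1,-1,-1) = - f1 * g2 * g3"
    and "Kvert x (a+1,b,c) (-1,1,1) = - g1 * f2 * f3"
    and "Kvert x (a+1,b,c+1) (-1,1,-1) = - g1 * f2 * g3"
    and "Kvert x (a+1,b+1,c) (-1,-1,1) = - g1 * g2 * f3"
    and "Kvert x (a+1,b+1,c+1) (-1,-1,-1) = g1 * g2 * g3"
    and "g1^2 = sqx x (a+1,b,c)"
    and "g2^2 = sqy x (a,b+1,c)"
    and "g3^2 = sqz x (a,b,c+1)"
    using R by (simp_all add: Kvert_eq sq_simps algebra_simps)
qed


lemma signs_eq: "signs = {(1,1,1),(1,1,-1),(1,-1,1),(1,-1,-1),(-1,1,1),(-1,1,-1),(-1,-1,1),(-1,-1,-1)}"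
  by (auto simp: signs_def)

lemma sq_dirs_eq: "sq_dirs = {((1,0,0),(0,1,0)), ((1,0,0),(0,-1,0)), ((-1,0,0),(0,1,0)), ((-1,0,0),(0,-1,0)),
   ((1,0,0),(0,0,1)), ((1,0,0),(0,0,-1)), ((-1,0,0),(0,0,1)), ((-1,0,0),(0,0,-1)),
   ((0,1,0),(0,0,1)), ((0,1,0),(0,0,-1)), ((0,-1,0),(0,0,1)), ((0,-1,0),(0,0,-1))}"
  by (auto simp: sq_dirs_def)

lemma sq_prod: "(\<Prod>d\<in>sq_dirs. x v * x (shift (shift v (fst d)) (snd d)) + x (shift v (fst d)) * x (shift v (snd d)))
  = (case v of (a,b,c) \<Rightarrow>
     sqz x (a,b,c) * (sqz x (a,b-1,c) * (sqz x (a-1,b,c) * (sqz x (a-1,b-1,c) *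
     (sqy x (a,b,c) * (sqy x (a,b,c-1) * (sqy x (a-1,b,c) * (sqy x (a-1,b,c-1) *
     (sqx x (a,b,c) * (sqx x (a,b,c-1) * (sqx x (a,b-1,c) * sqx x (a,b-1,c-1))))))))))))"
proof (cases v)
  case (fields a b c)
  have E: "x (a, b, c) * x (a + 1, b + 1, c) + x (a + 1, b, c) * x (a, b + 1, c) = sqz x (a,b,c)"
    "x (a, b, c) * x (a + 1, b - 1, c) + x (a + 1, b, c) * x (a, b - 1, c) = sqz x (a,b-1,c)"
    "x (a, b, c) * x (a - 1, b + 1, c) + x (a - 1, b, c) * x (a, b + 1, c) = sqz x (a-1,b,c)"
    "x (a, b, c) * x (a - 1, b - 1, c) + x (a - 1, b, c) * x (a, b - 1, c) = sqz x (a-1,b-1,c)"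
    "x (a, b, c) * x (a + 1, b, c + 1) + x (a + 1, b, c) * x (a, b, c + 1) = sqy x (a,b,c)"
    "x (a, b, c) * x (a + 1, b, c - 1) + x (a + 1, b, c) * x (a, b, c - 1) = sqy x (a,b,c-1)"
    "x (a, b, c) * x (a - 1, b, c + 1) + x (a - 1, b, c) * x (a, b, c + 1) = sqy x (a-1,b,c)"
    "x (a, b, c) * x (a - 1, b, c - 1) + x (a - 1, b, c) * x (a, b, c - 1) = sqy x (a-1,b,c-1)"
    "x (a, b, c) * x (a, b + 1, c + 1) + x (a, b + 1, c) * x (a, b, c + 1) = sqx x (a,b,c)"
    "x (a, b, c) * x (a, b + 1, c - 1) + x (a, b + 1, c) * x (a, b, c - 1) = sqx x (a,b,c-1)"
    "x (a, b, c) * x (a, b - 1, c + 1) + x (a, b - 1, c) * x (a, b, c + 1) = sqx x (a,b-1,c)"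
    "x (a, b, c) * x (a, b - 1, c - 1) + x (a, b - 1, c) * x (a, b, c - 1) = sqx x (a,b-1,c-1)"
    by (simp_all add: sq_simps algebra_simps)
  show ?thesis unfolding fields by (simp add: sq_dirs_eq shift_def E)
qed


lemma vertex_prod:
  fixes x Fx Fy Fz G :: "pt \<Rightarrow> complex"
  assumes nz: "\<And>p q r. x(p,q,r) \<noteq> 0"
  and A1: "\<And>p q r. Fx(p,q,r)^2 = sqx x (p,q,r)"
  and A2: "\<And>p q r. Fy(p,q,r)^2 = sqy x (p,q,r)"
  and A3: "\<And>p q r. Fz(p,q,r)^2 = sqz x (p,q,r)"
  and B: "\<And>p q r. Fx(p,q,r)*Fy(p,q,r)*Fz(p,q,r) = Kmin x (p,q,r)"
  and C1: "\<And>p q r. Fx(p+1,q,r) * x(p,q,r) = Fy(p,q,r)*Fz(p,q,r) + Fx(p,q,r)*x(p+1,q,r)"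
  and C2: "\<And>p q r. Fy(p,q+1,r) * x(p,q,r) = Fx(p,q,r)*Fz(p,q,r) + Fy(p,q,r)*x(p,q+1,r)"
  and C3: "\<And>p q r. G(p,q,r) * x(p,q,r) = Fx(p,q,r)*Fy(p,q,r) + Fz(p,q,r)*x(p,q,r+1)"
  shows "(\<Prod>\<sigma>\<in>signs. Kvert x (a,b,c) \<sigma>) =
    (Fz(a,b,c) * Fz(a,b-1,c) * Fz(a-1,b,c) * Fz(a-1,b-1,c)) *
    (G(a,b,c-1) * G(a,b-1,c-1) * G(a-1,b,c-1) * G(a-1,b-1,c-1)) *
    (Fy(a,b,c) * Fy(a,b,c-1) * Fy(a-1,b,c) * Fy(a-1,b,c-1))^2 *
    (Fx(a,b,c) * Fx(a,b,c-1) * Fx(a,b-1,c) * Fx(a,b-1,c-1))^2"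
proof -
  note L000 = cube_loc[OF nz[of "a" "b" "c"] A1[of "a" "b" "c"] A2[of "a" "b" "c"] A3[of "a" "b" "c"] B[of "a" "b" "c"] C1[of "a" "b" "c"] C2[of "a" "b" "c"] C3[of "a" "b" "c"]]
  note L001 = cube_loc[OF nz[of "a" "b" "c-1"] A1[of "a" "b" "c-1"] A2[of "a" "b" "c-1"] A3[of "a" "b" "c-1"] B[of "a" "b" "c-1"] C1[of "a" "b" "c-1"] C2[of "a" "b" "c-1"] C3[of "a" "b" "c-1"]]
  note L010 = cube_loc[OF nz[of "a" "b-1" "c"] A1[of "a" "b-1" "c"] A2[of "a" "b-1" "c"] A3[of "a" "b-1" "c"] B[of "a" "b-1" "c"] C1[of "a" "b-1" "c"] C2[of "a" "b-1" "c"] C3[of "a" "b-1" "c"]]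
  note L011 = cube_loc[OF nz[of "a" "b-1" "c-1"] A1[of "a" "b-1" "c-1"] A2[of "a" "b-1" "c-1"] A3[of "a" "b-1" "c-1"] B[of "a" "b-1" "c-1"] C1[of "a" "b-1" "c-1"] C2[of "a" "b-1" "c-1"] C3[of "a" "b-1" "c-1"]]
  note L100 = cube_loc[OF nz[of "a-1" "b" "c"] A1[of "a-1" "b" "c"] A2[of "a-1" "b" "c"] A3[of "a-1" "b" "c"] B[of "a-1" "b" "c"] C1[of "a-1" "b" "c"] C2[of "a-1" "b" "c"] C3[of "a-1" "b" "c"]]
  note L101 = cube_loc[OF nz[of "a-1" "b" "c-1"] A1[of "a-1" "b" "c-1"] A2[of "a-1" "b" "c-1"] A3[of "a-1" "b" "c-1"] B[of "a-1" "b" "c-1"] C1[of "a-1" "b" "c-1"] C2[of "a-1" "b" "c-1"] C3[of "a-1" "b" "c-1"]]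
  note L110 = cube_loc[OF nz[of "a-1" "b-1" "c"] A1[of "a-1" "b-1" "c"] A2[of "a-1" "b-1" "c"] A3[of "a-1" "b-1" "c"] B[of "a-1" "b-1" "c"] C1[of "a-1" "b-1" "c"] C2[of "a-1" "b-1" "c"] C3[of "a-1" "b-1" "c"]]
  note L111 = cube_loc[OF nz[of "a-1" "b-1" "c-1"] A1[of "a-1" "b-1" "c-1"] A2[of "a-1" "b-1" "c-1"] A3[of "a-1" "b-1" "c-1"] B[of "a-1" "b-1" "c-1"] C1[of "a-1" "b-1" "c-1"] C2[of "a-1" "b-1" "c-1"] C3[of "a-1" "b-1" "c-1"]]
  have P: "(\<Prod>\<sigma>\<in>signs. Kvert x (a,b,c) \<sigma>) = Kvert x (a,b,c) (1,1,1) * Kvert x (a,b,c) (1,1,-1) *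
     Kvert x (a,b,c) (1,-1,1) * Kvert x (a,b,c) (1,-1,-1) * Kvert x (a,b,c) (-1,1,1) *
     Kvert x (a,b,c) (-1,1,-1) * Kvert x (a,b,c) (-1,-1,1) * Kvert x (a,b,c) (-1,-1,-1)"
    by (simp add: signs_eq mult.assoc)
  have K1: "Kvert x (a,b,c) (1,1,1) = Fx(a,b,c) * Fy(a,b,c) * Fz(a,b,c)" using L000(1) by simp
  have K2: "Kvert x (a,b,c) (1,1,-1) = - Fx(a,b,c-1) * Fy(a,b,c-1) * G(a,b,c-1)" using L001(2) by simp
  have K3: "Kvert x (a,b,c) (1,-1,1) = - Fx(a,b-1,c) * Fy(a,b,c) * Fz(a,b-1,c)" using L010(3) by simp
  have K4: "Kvert x (a,b,c) (1,-1,-1) = - Fx(a,b-1,c-1) * Fy(a,b,c-1) * G(a,b-1,c-1)" using L011(4) by simp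
  have K5: "Kvert x (a,b,c) (-1,1,1) = - Fx(a,b,c) * Fy(a-1,b,c) * Fz(a-1,b,c)" using L100(5) by simp
  have K6: "Kvert x (a,b,c) (-1,1,-1) = - Fx(a,b,c-1) * Fy(a-1,b,c-1) * G(a-1,b,c-1)" using L101(6) by simp
  have K7: "Kvert x (a,b,c) (-1,-1,1) = - Fx(a,b-1,c) * Fy(a-1,b,c) * Fz(a-1,b-1,c)" using L110(7) by simp
  have K8: "Kvert x (a,b,c) (-1,-1,-1) = Fx(a,b-1,c-1) * Fy(a-1,b,c-1) * G(a-1,b-1,c-1)" using L111(8) by simp
  show ?thesis unfolding P K1 K2 K3 K4 K5 K6 K7 K8 by (simp add: algebra_simps power2_eq_square)
qed


definition kc :: "complex \<Rightarrow> complex \<Rightarrow> complex \<Rightarrow> complex \<Rightarrow> complex \<Rightarrow> complex \<Rightarrow> complex \<Rightarrow> complex \<Rightarrow> complex" where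
 "kc z000 z100 z010 z001 z011 z101 z110 z111 =
   (let a = z000 * z111; b = z100 * z011; c = z010 * z101; d = z001 * z110;
        s = z000 * z011 * z101 * z110; t = z111 * z100 * z010 * z001
     in 2 * (a^2 + b^2 + c^2 + d^2) - (a + b + c + d)^2 - 4 * (s + t))"

lemma Kcube_eq: "Kcube x (a,b,c) = kc (x(a,b,c)) (x(a+1,b,c)) (x(a,b+1,c)) (x(a,b,c+1))
   (x(a,b+1,c+1)) (x(a+1,b,c+1)) (x(a+1,b+1,c)) (x(a+1,b+1,c+1))"
  by (simp add: Kcube_def kc_def shift_def Let_def)

lemma kc_id: "4 * (kv z000 z100 z010 z001 z011 z101 z110 z111 ^ 2
   - (z000*z011 + z010*z001) * (z000*z101 + z100*z001) * (z000*z110 + z100*z010))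
   = z000^2 * kc z000 z100 z010 z001 z011 z101 z110 z111"
  unfolding kv_def kc_def Let_def by algebra

lemma dbl_simp: "dbl (p,q,r) = (2*p,2*q,2*r)" by (simp add: dbl_def)

lemma Kcube_iff:
  assumes "x(a,b,c) \<noteq> 0"
  shows "Kcube x (a,b,c) = 0 \<longleftrightarrow> Kmin x (a,b,c)^2 = sqx x (a,b,c) * sqy x (a,b,c) * sqz x (a,b,c)"
proof -
  have "4 * (Kmin x (a,b,c)^2 - sqx x (a,b,c) * sqy x (a,b,c) * sqz x (a,b,c)) = x(a,b,c)^2 * Kcube x (a,b,c)"
    unfolding Kmin_eq Kcube_eq sq_simps by (rule kc_id)
  then show ?thesis using assms by (metis (no_types, lifting) mult_eq_0_iff power_not_zero right_minus_eq zero_neq_numeral)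
qed





lemma hexa_facts:
  assumes H: "K_hexahedron xt"
  defines "X \<equiv> (\<lambda>v. xt (dbl v))"
  shows "X(p,q,r) \<noteq> 0"
  and "xt(2*p,2*q+1,2*r+1)^2 = sqx X (p,q,r)"
  and "xt(2*p+1,2*q,2*r+1)^2 = sqy X (p,q,r)"
  and "xt(2*p+1,2*q+1,2*r)^2 = sqz X (p,q,r)"
  and "xt(2*p,2*q+1,2*r+1) * xt(2*p+1,2*q,2*r+1) * xt(2*p+1,2*q+1,2*r) = Kmin X (p,q,r)"
  and "xt(2*(p+1),2*q+1,2*r+1) * X(p,q,r) = xt(2*p+1,2*q,2*r+1) * xt(2*p+1,2*q+1,2*r) + xt(2*p,2*q+1,2*r+1) * X(p+1,q,r)"
  and "xt(2*p+1,2*(q+1),2*r+1) * X(p,q,r) = xt(2*p,2*q+1,2*r+1) * xt(2*p+1,2*q+1,2*r) + xt(2*p+1,2*q,2*r+1) * X(p,q+1,r)"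
  and "xt(2*p+1,2*q+1,2*(r+1)) * X(p,q,r) = xt(2*p,2*q+1,2*r+1) * xt(2*p+1,2*q,2*r+1) + xt(2*p+1,2*q+1,2*r) * X(p,q,r+1)"
proof -
  note HH = H[unfolded K_hexahedron_def]
  note nz = HH[THEN conjunct1, rule_format]
  note i1 = HH[THEN conjunct2, THEN conjunct1, rule_format]
  note i2 = HH[THEN conjunct2, THEN conjunct2, THEN conjunct1, rule_format]
  note i3 = HH[THEN conjunct2, THEN conjunct2, THEN conjunct2, THEN conjunct1, rule_format]
  note ii = HH[THEN conjunct2, THEN conjunct2, THEN conjunct2, THEN conjunct2, rule_format]
  have n0: "xt(2*p,2*q,2*r) \<noteq> 0" using nz[of "(p,q,r)"] by (simp add: dbl_simp)
  show "X(p,q,r) \<noteq> 0" using n0 by (simp add: X_def dbl_simp)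
  show "xt(2*p,2*q+1,2*r+1)^2 = sqx X (p,q,r)"
    using i1[of "2*p" "2*q+1" "2*r+1"] by (simp add: X_def dbl_simp sq_simps algebra_simps)
  show "xt(2*p+1,2*q,2*r+1)^2 = sqy X (p,q,r)"
    using i2[of "2*p+1" "2*q" "2*r+1"] by (simp add: X_def dbl_simp sq_simps algebra_simps)
  show "xt(2*p+1,2*q+1,2*r)^2 = sqz X (p,q,r)"
    using i3[of "2*p+1" "2*q+1" "2*r"] by (simp add: X_def dbl_simp sq_simps algebra_simps)
  have ii': "xt(2*p+2,2*q+1,2*r+1) = (xt(2*p+1,2*q,2*r+1) * xt(2*p+1,2*q+1,2*r) + xt(2*p,2*q+1,2*r+1) * xt(2*p+2,2*q,2*r)) / xt(2*p,2*q,2*r)"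
   "xt(2*p+1,2*q+2,2*r+1) = (xt(2*p,2*q+1,2*r+1) * xt(2*p+1,2*q+1,2*r) + xt(2*p+1,2*q,2*r+1) * xt(2*p,2*q+2,2*r)) / xt(2*p,2*q,2*r)"
   "xt(2*p+1,2*q+1,2*r+2) = (xt(2*p,2*q+1,2*r+1) * xt(2*p+1,2*q,2*r+1) + xt(2*p+1,2*q+1,2*r) * xt(2*p,2*q,2*r+2)) / xt(2*p,2*q,2*r)"
   "xt(2*p+2,2*q+2,2*r+2) = (2 * xt(2*p+2,2*q,2*r) * xt(2*p,2*q+2,2*r) * xt(2*p,2*q,2*r+2)
        + xt(2*p,2*q,2*r) * (xt(2*p+2,2*q,2*r) * xt(2*p,2*q+2,2*r+2) + xt(2*p,2*q+2,2*r) * xt(2*p+2,2*q,2*r+2)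
            + xt(2*p,2*q,2*r+2) * xt(2*p+2,2*q+2,2*r))
        + 2 * xt(2*p,2*q+1,2*r+1) * xt(2*p+1,2*q,2*r+1) * xt(2*p+1,2*q+1,2*r)) / (xt(2*p,2*q,2*r))^2"
    using ii[of "(p,q,r)"] by (simp_all add: Let_def dbl_simp shift_def)
  show "xt(2*p,2*q+1,2*r+1) * xt(2*p+1,2*q,2*r+1) * xt(2*p+1,2*q+1,2*r) = Kmin X (p,q,r)"
    unfolding Kmin_eq X_def dbl_simp using ii'(4) n0 by (simp add: kv_def field_simps ring_distribs)
  show "xt(2*(p+1),2*q+1,2*r+1) * X(p,q,r) = xt(2*p+1,2*q,2*r+1) * xt(2*p+1,2*q+1,2*r) + xt(2*p,2*q+1,2*r+1) * X(p+1,q,r)"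
    unfolding X_def dbl_simp using ii'(1) n0 by (simp add: field_simps ring_distribs)
  show "xt(2*p+1,2*(q+1),2*r+1) * X(p,q,r) = xt(2*p,2*q+1,2*r+1) * xt(2*p+1,2*q+1,2*r) + xt(2*p+1,2*q,2*r+1) * X(p,q+1,r)"
    unfolding X_def dbl_simp using ii'(2) n0 by (simp add: field_simps ring_distribs)
  show "xt(2*p+1,2*q+1,2*(r+1)) * X(p,q,r) = xt(2*p,2*q+1,2*r+1) * xt(2*p+1,2*q,2*r+1) + xt(2*p+1,2*q+1,2*r) * X(p,q,r+1)"
    unfolding X_def dbl_simp using ii'(3) n0 by (simp add: field_simps ring_distribs)
qed

lemma partb:
  assumes H: "K_hexahedron xt"
  shows "coherent (\<lambda>v. xt (dbl v))"
proof -
  define X where "X = (\<lambda>v. xt (dbl v))"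
  note hf = hexa_facts[OF H, folded X_def]
  have nzX: "\<And>p q r. X(p,q,r) \<noteq> 0" using hf(1) by (simp add: X_def)
  have hfs: "\<And>p q r. xt (2 * p + 2, 2 * q + 1, 2 * r + 1) * X (p, q, r) =
        xt (2 * p + 1, 2 * q, 2 * r + 1) * xt (2 * p + 1, 2 * q + 1, 2 * r) +
        xt (2 * p, 2 * q + 1, 2 * r + 1) * X (p + 1, q, r)"
    "\<And>p q r. xt (2 * p + 1, 2 * q + 2, 2 * r + 1) * X (p, q, r) =
        xt (2 * p, 2 * q + 1, 2 * r + 1) * xt (2 * p + 1, 2 * q + 1, 2 * r) +
        xt (2 * p + 1, 2 * q, 2 * r + 1) * X (p, q + 1, r)"
    "\<And>p q r. xt (2 * p + 1, 2 * q + 1, 2 * r + 2) * X (p, q, r) =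
        xt (2 * p, 2 * q + 1, 2 * r + 1) * xt (2 * p + 1, 2 * q, 2 * r + 1) +
        xt (2 * p + 1, 2 * q + 1, 2 * r) * X (p, q, r + 1)"
    using hf(6,7,8) by (simp_all add: X_def dbl_simp algebra_simps)
  have kc: "Kcube X w = 0" for w
  proof (cases w)
    case (fields a b c)
    have "Kmin X (a,b,c)^2 = sqx X (a,b,c) * sqy X (a,b,c) * sqz X (a,b,c)"
      unfolding hf(5)[symmetric] hf(2)[symmetric] hf(3)[symmetric] hf(4)[symmetric]
      by (simp add: power_mult_distrib)
    moreover have "X (a,b,c) \<noteq> 0" using hf(1) by (simp add: X_def)
    ultimately show ?thesis unfolding fields using Kcube_iff[of X a b c] by blast
  qed
  have vp: "(\<Prod>\<sigma>\<in>signs. Kvert X v \<sigma>) =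
          (\<Prod>d\<in>sq_dirs. X v * X (shift (shift v (fst d)) (snd d)) + X (shift v (fst d)) * X (shift v (snd d)))" for v
  proof (cases v)
    case (fields a b c)
    have V: "(\<Prod>\<sigma>\<in>signs. Kvert X (a,b,c) \<sigma>) =
    ((\<lambda>(p,q,r). xt(2*p+1,2*q+1,2*r))(a,b,c) * (\<lambda>(p,q,r). xt(2*p+1,2*q+1,2*r))(a,b-1,c) * (\<lambda>(p,q,r). xt(2*p+1,2*q+1,2*r))(a-1,b,c) * (\<lambda>(p,q,r). xt(2*p+1,2*q+1,2*r))(a-1,b-1,c)) *
    ((\<lambda>(p,q,r). xt(2*p+1,2*q+1,2*(r+1)))(a,b,c-1) * (\<lambda>(p,q,r). xt(2*p+1,2*q+1,2*(r+1)))(a,b-1,c-1) * (\<lambda>(p,q,r). xt(2*p+1,2*q+1,2*(r+1)))(a-1,b,c-1) * (\<lambda>(p,q,r). xt(2*p+1,2*q+1,2*(r+1)))(a-1,b-1,c-1)) *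
    ((\<lambda>(p,q,r). xt(2*p+1,2*q,2*r+1))(a,b,c) * (\<lambda>(p,q,r). xt(2*p+1,2*q,2*r+1))(a,b,c-1) * (\<lambda>(p,q,r). xt(2*p+1,2*q,2*r+1))(a-1,b,c) * (\<lambda>(p,q,r). xt(2*p+1,2*q,2*r+1))(a-1,b,c-1))^2 *
    ((\<lambda>(p,q,r). xt(2*p,2*q+1,2*r+1))(a,b,c) * (\<lambda>(p,q,r). xt(2*p,2*q+1,2*r+1))(a,b,c-1) * (\<lambda>(p,q,r). xt(2*p,2*q+1,2*r+1))(a,b-1,c) * (\<lambda>(p,q,r). xt(2*p,2*q+1,2*r+1))(a,b-1,c-1))^2"
      by (rule vertex_prod[where Fx="\<lambda>(p,q,r). xt(2*p,2*q+1,2*r+1)" and Fy="\<lambda>(p,q,r). xt(2*p+1,2*q,2*r+1)"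
          and Fz="\<lambda>(p,q,r). xt(2*p+1,2*q+1,2*r)" and G="\<lambda>(p,q,r). xt(2*p+1,2*q+1,2*(r+1))"])
        (simp_all add: hf nzX hfs)
    show ?thesis unfolding fields V sq_prod
      by (simp add: hf(2,3,4)[symmetric] algebra_simps power2_eq_square)
  qed
  show ?thesis unfolding coherent_def X_def[symmetric] using kc vp by blast
qed




definition pot :: "(int \<Rightarrow> complex) \<Rightarrow> int \<Rightarrow> complex" where
  "pot u n = (if 0 \<le> n then (\<Prod>i\<in>{0..<n}. u i) else (\<Prod>i\<in>{n..<0}. u i))"

lemma pot_0[simp]: "pot u 0 = 1" by (simp add: pot_def)

lemma pot_step:
  assumes u: "\<And>i. u i ^ 2 = 1"
  shows "pot u (n+1) = pot u n * u n"
proof (cases "0 \<le> n")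
  case True
  then have "{0..<n+1} = insert n {0..<n}" by auto
  then show ?thesis using True by (simp add: pot_def mult.commute)
next
  case False
  show ?thesis
  proof (cases "n = -1")
    case True
    have "{-1..<0::int} = {-1}" by auto
    then show ?thesis using u[of "-1"] True by (simp add: pot_def power2_eq_square)
  next
    case False
    with \<open>\<not> 0 \<le> n\<close> have n1: "\<not> 0 \<le> n+1" by simp
    have "{n..<0} = insert n {n+1..<0}" using \<open>\<not> 0 \<le> n\<close> by auto
    then have "pot u n = u n * pot u (n+1)" using \<open>\<not> 0 \<le> n\<close> n1 by (simp add: pot_def)
    then show ?thesis using u[of n] by (simp add: power2_eq_square algebra_simps)
  qed
qed

lemma pot_sq:
  assumes u: "\<And>i. u i ^ 2 = 1"
  shows "pot u n ^ 2 = 1"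
  using u by (simp add: pot_def power2_eq_square prod.distrib[symmetric])


lemma cube_a:
  fixes x :: "pt \<Rightarrow> complex" and f1 f2 :: complex
  assumes nz: "x(a,b,c) \<noteq> 0" and kc: "Kcube x (a,b,c) = 0"
  and h1: "f1^2 = sqx x (a,b,c)" and h2: "f2^2 = sqy x (a,b,c)" and n1: "f1 \<noteq> 0" and n2: "f2 \<noteq> 0"
  defines "f3 \<equiv> Kmin x (a,b,c) / (f1*f2)"
  defines "g1 \<equiv> (f2*f3 + f1*x(a+1,b,c)) / x(a,b,c)"
  defines "g2 \<equiv> (f1*f3 + f2*x(a,b+1,c)) / x(a,b,c)"
  defines "g3 \<equiv> (f1*f2 + f3*x(a,b,c+1)) / x(a,b,c)"
  shows "f3^2 = sqz x (a,b,c)" "f1*f2*f3 = Kmin x (a,b,c)"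
    "g1^2 = sqx x (a+1,b,c)" "g2^2 = sqy x (a,b+1,c)" "g3^2 = sqz x (a,b,c+1)"
    "(Kmin x (a,b,c) + sqx x (a,b,c) * x(a+1,b,c)) / x(a,b,c) = f1 * g1"
    "(Kmin x (a,b,c) + sqy x (a,b,c) * x(a,b+1,c)) / x(a,b,c) = f2 * g2"
proof -
  have K2: "Kmin x (a,b,c)^2 = sqx x (a,b,c) * sqy x (a,b,c) * sqz x (a,b,c)"
    using Kcube_iff[of x a b c] nz kc by blast
  show A3: "f3^2 = sqz x (a,b,c)"
    using K2 n1 n2 unfolding f3_def h1[symmetric] h2[symmetric] by (simp add: power_divide power_mult_distrib field_simps)
  show B: "f1*f2*f3 = Kmin x (a,b,c)" unfolding f3_def using n1 n2 by simp
  have C1: "g1 * x(a,b,c) = f2*f3 + f1*x(a+1,b,c)" unfolding g1_def using nz by simp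
  have C2: "g2 * x(a,b,c) = f1*f3 + f2*x(a,b+1,c)" unfolding g2_def using nz by simp
  have C3: "g3 * x(a,b,c) = f1*f2 + f3*x(a,b,c+1)" unfolding g3_def using nz by simp
  note L = cube_loc[of x a b c, OF nz h1 h2 A3 B C1 C2 C3]
  show "g1^2 = sqx x (a+1,b,c)" "g2^2 = sqy x (a,b+1,c)" "g3^2 = sqz x (a,b,c+1)" using L(9-11) .
  show "(Kmin x (a,b,c) + sqx x (a,b,c) * x(a+1,b,c)) / x(a,b,c) = f1 * g1"
    unfolding g1_def B[symmetric] h1[symmetric] using nz by (simp add: field_simps power2_eq_square)
  show "(Kmin x (a,b,c) + sqy x (a,b,c) * x(a,b+1,c)) / x(a,b,c) = f2 * g2"
    unfolding g2_def B[symmetric] h2[symmetric] using nz by (simp add: field_simps power2_eq_square)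
qed


lemma grid2:
  fixes q :: "int \<Rightarrow> int \<Rightarrow> complex"
  assumes sq: "\<And>a b. q a b ^ 2 = 1"
  and blk: "\<And>a b. q a b * q (a+1) b * q a (b+1) * q (a+1) (b+1) = 1"
  shows "q a b = q a 0 * q 0 b * q 0 0"
proof -
  define G where "G a b = q a b * q a (b+1)" for a b
  have Gsq: "G a b ^ 2 = 1" for a b unfolding G_def using sq by (simp add: power_mult_distrib)
  have Gst: "G (a+1) b = G a b" for a b
  proof -
    have "G a b * G (a+1) b = 1" unfolding G_def using blk[of a b] by (simp add: algebra_simps)
    moreover have "G (a+1) b = (G a b * G a b) * G (a+1) b" using Gsq[of a b] by (simp add: power2_eq_square)
    ultimately show ?thesis by (simp add: mult.assoc)
  qed
  have G0: "G a b = G 0 b" for a b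
  proof (induct a rule: int_induct[where k=0])
    case base then show ?case by simp
  next
    case (step1 i) then show ?case using Gst[of i b] by simp
  next
    case (step2 i) then show ?case using Gst[of "i-1" b] by simp
  qed
  define H where "H a b = q a b * q a 0" for a b
  have H0: "H a b = H 0 b" for b
  proof (induct b rule: int_induct[where k=0])
    case base then show ?case unfolding H_def using sq[of a 0] sq[of 0 0] by (simp add: power2_eq_square)
  next
    case (step1 i)
    have "H a (i+1) = G a i * H a i" for a
      unfolding H_def G_def using sq[of a i] by (simp add: power2_eq_square algebra_simps)
    then show ?case using step1 G0[of a i] by simp
  next
    case (step2 i)
    have "H a (i-1) = G a (i-1) * H a i" for a
      unfolding H_def G_def using sq[of a "i"] by (simp add: power2_eq_square algebra_simps)
    then show ?case using step2 G0[of a "i-1"] by simp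
  qed
  have "q a b = H a b * q a 0" unfolding H_def using sq[of a 0] by (simp add: power2_eq_square algebra_simps)
  also have "\<dots> = q a 0 * q 0 b * q 0 0" using H0[of b] unfolding H_def by (simp add: algebra_simps)
  finally show ?thesis .
qed




locale kash =
  fixes x :: "pt \<Rightarrow> complex"
  assumes nz: "\<And>p q r. x(p,q,r) \<noteq> 0"
  and kc: "\<And>p q r. Kcube x (p,q,r) = 0"
  and coh: "\<And>v. (\<Prod>\<sigma>\<in>signs. Kvert x v \<sigma>) =
          (\<Prod>d\<in>sq_dirs. x v * x (shift (shift v (fst d)) (snd d)) + x (shift v (fst d)) * x (shift v (snd d)))"
  and snx: "\<And>p q r. sqx x (p,q,r) \<noteq> 0"
  and sny: "\<And>p q r. sqy x (p,q,r) \<noteq> 0"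
  and snz: "\<And>p q r. sqz x (p,q,r) \<noteq> 0"
begin

definition "P1 a b c = (Kmin x (a,b,c) + sqx x (a,b,c) * x(a+1,b,c)) / x(a,b,c)"
definition "P2 a b c = (Kmin x (a,b,c) + sqy x (a,b,c) * x(a,b+1,c)) / x(a,b,c)"
definition "rx a b c = csqrt (sqx x (a,b,c))"
definition "ry a b c = csqrt (sqy x (a,b,c))"
definition "m1 a b c = P1 a b c / (rx a b c * rx (a+1) b c)"
definition "m2 a b c = P2 a b c / (ry a b c * ry a (b+1) c)"
definition "fx0 a b c = pot (\<lambda>t. m1 t b c) a * rx a b c"
definition "fy0 a b c = pot (\<lambda>t. m2 a t c) b * ry a b c"
definition "fz0 a b c = Kmin x (a,b,c) / (fx0 a b c * fy0 a b c)"
definition "g0 a b c = (fx0 a b c * fy0 a b c + fz0 a b c * x(a,b,c+1)) / x(a,b,c)"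
definition "qq a b c = g0 a b c / fz0 a b (c+1)"

lemma rx_sq: "rx a b c ^ 2 = sqx x (a,b,c)" by (simp add: rx_def)
lemma ry_sq: "ry a b c ^ 2 = sqy x (a,b,c)" by (simp add: ry_def)
lemma rx_nz: "rx a b c \<noteq> 0" using snx[of a b c] by (simp add: rx_def)
lemma ry_nz: "ry a b c \<noteq> 0" using sny[of a b c] by (simp add: ry_def)

lemma P_sq: "P1 a b c ^ 2 = sqx x (a,b,c) * sqx x (a+1,b,c)"
   "P2 a b c ^ 2 = sqy x (a,b,c) * sqy x (a,b+1,c)"
proof -
  note C = cube_a[of x a b c "rx a b c" "ry a b c", OF nz kc rx_sq ry_sq rx_nz ry_nz]
  show "P1 a b c ^ 2 = sqx x (a,b,c) * sqx x (a+1,b,c)"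
    unfolding P1_def C(6) power_mult_distrib rx_sq C(3) ..
  show "P2 a b c ^ 2 = sqy x (a,b,c) * sqy x (a,b+1,c)"
    unfolding P2_def C(7) power_mult_distrib ry_sq C(4) ..
qed

lemma m_sq: "m1 a b c ^ 2 = 1" "m2 a b c ^ 2 = 1"
  unfolding m1_def m2_def power_divide power_mult_distrib P_sq rx_sq ry_sq
  using snx sny by simp_all

lemma fx0_sq: "fx0 a b c ^ 2 = sqx x (a,b,c)"
  unfolding fx0_def power_mult_distrib rx_sq pot_sq[OF m_sq(1)] by simp
lemma fy0_sq: "fy0 a b c ^ 2 = sqy x (a,b,c)"
  unfolding fy0_def power_mult_distrib ry_sq pot_sq[OF m_sq(2)] by simp
lemma fx0_nz: "fx0 a b c \<noteq> 0" using fx0_sq[of a b c] snx[of a b c] by auto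
lemma fy0_nz: "fy0 a b c \<noteq> 0" using fy0_sq[of a b c] sny[of a b c] by auto

lemma fx0_step: "fx0 (a+1) b c * fx0 a b c = P1 a b c"
proof -
  have "fx0 (a+1) b c * fx0 a b c = pot (\<lambda>t. m1 t b c) a ^ 2 * (m1 a b c * rx (a+1) b c * rx a b c)"
    unfolding fx0_def pot_step[OF m_sq(1)] by (simp add: power2_eq_square algebra_simps)
  also have "\<dots> = m1 a b c * rx (a+1) b c * rx a b c" using pot_sq[OF m_sq(1)] by simp
  also have "\<dots> = P1 a b c" unfolding m1_def using rx_nz[of a b c] rx_nz[of "a+1" b c] by simp
  finally show ?thesis .
qed

lemma fy0_step: "fy0 a (b+1) c * fy0 a b c = P2 a b c"
proof -
  have "fy0 a (b+1) c * fy0 a b c = pot (\<lambda>t. m2 a t c) b ^ 2 * (m2 a b c * ry a (b+1) c * ry a b c)"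
    unfolding fy0_def pot_step[OF m_sq(2)] by (simp add: power2_eq_square algebra_simps)
  also have "\<dots> = m2 a b c * ry a (b+1) c * ry a b c" using pot_sq[OF m_sq(2)] by simp
  also have "\<dots> = P2 a b c" unfolding m2_def using ry_nz[of a b c] ry_nz[of a "b+1" c] by simp
  finally show ?thesis .
qed

lemma local0:
  "fz0 a b c ^ 2 = sqz x (a,b,c)"
  "fx0 a b c * fy0 a b c * fz0 a b c = Kmin x (a,b,c)"
  "fx0 (a+1) b c * x(a,b,c) = fy0 a b c * fz0 a b c + fx0 a b c * x(a+1,b,c)"
  "fy0 a (b+1) c * x(a,b,c) = fx0 a b c * fz0 a b c + fy0 a b c * x(a,b+1,c)"
  "g0 a b c ^ 2 = sqz x (a,b,c+1)"
  "g0 a b c * x(a,b,c) = fx0 a b c * fy0 a b c + fz0 a b c * x(a,b,c+1)"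
proof -
  note C = cube_a[of x a b c "fx0 a b c" "fy0 a b c", OF nz kc fx0_sq fy0_sq fx0_nz fy0_nz, folded fz0_def]
  show "fz0 a b c ^ 2 = sqz x (a,b,c)" using C(1) .
  show "fx0 a b c * fy0 a b c * fz0 a b c = Kmin x (a,b,c)" using C(2) .
  show "g0 a b c ^ 2 = sqz x (a,b,c+1)" using C(5) unfolding g0_def .
  show "g0 a b c * x(a,b,c) = fx0 a b c * fy0 a b c + fz0 a b c * x(a,b,c+1)"
    unfolding g0_def using nz[of a b c] by simp
  have "fx0 (a+1) b c * fx0 a b c = fx0 a b c * ((fy0 a b c * fz0 a b c + fx0 a b c * x(a+1,b,c)) / x(a,b,c))"
    using fx0_step C(6) unfolding P1_def by simp
  then have "fx0 (a+1) b c = (fy0 a b c * fz0 a b c + fx0 a b c * x(a+1,b,c)) / x(a,b,c)"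
    using fx0_nz[of a b c] by (metis mult.commute mult_left_cancel)
  then show "fx0 (a+1) b c * x(a,b,c) = fy0 a b c * fz0 a b c + fx0 a b c * x(a+1,b,c)"
    using nz[of a b c] by (simp add: field_simps)
  have "fy0 a (b+1) c * fy0 a b c = fy0 a b c * ((fx0 a b c * fz0 a b c + fy0 a b c * x(a,b+1,c)) / x(a,b,c))"
    using fy0_step C(7) unfolding P2_def by simp
  then have "fy0 a (b+1) c = (fx0 a b c * fz0 a b c + fy0 a b c * x(a,b+1,c)) / x(a,b,c)"
    using fy0_nz[of a b c] by (metis mult.commute mult_left_cancel)
  then show "fy0 a (b+1) c * x(a,b,c) = fx0 a b c * fz0 a b c + fy0 a b c * x(a,b+1,c)"
    using nz[of a b c] by (simp add: field_simps)
qed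


lemma fz0_nz: "fz0 a b c \<noteq> 0" using local0(1)[of a b c] snz[of a b c] by auto

lemma g0_eq: "g0 a b c = qq a b c * fz0 a b (c+1)"
  unfolding qq_def using fz0_nz[of a b "c+1"] by simp

lemma qq_sq: "qq a b c ^ 2 = 1"
  unfolding qq_def power_divide local0(5) local0(1) using snz[of a b "c+1"] by simp

lemma block: "qq a b c * qq (a+1) b c * qq a (b+1) c * qq (a+1) (b+1) c = 1"
proof -
  define M where "M = sqz x (a+1,b+1,c+1) * (sqz x (a+1,b,c+1) * (sqz x (a,b+1,c+1) * (sqz x (a,b,c+1) *
     (sqy x (a+1,b+1,c+1) * (sqy x (a+1,b+1,c) * (sqy x (a,b+1,c+1) * (sqy x (a,b+1,c) *
     (sqx x (a+1,b+1,c+1) * (sqx x (a+1,b+1,c) * (sqx x (a+1,b,c+1) * sqx x (a+1,b,c)))))))))))"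
  have Mnz: "M \<noteq> 0" unfolding M_def using snx sny snz by simp
  have S: "(\<Prod>d\<in>sq_dirs. x (a+1,b+1,c+1) * x (shift (shift (a+1,b+1,c+1) (fst d)) (snd d)) + x (shift (a+1,b+1,c+1) (fst d)) * x (shift (a+1,b+1,c+1) (snd d))) = M"
    unfolding M_def sq_prod by simp
  have V: "(\<Prod>\<sigma>\<in>signs. Kvert x (a+1,b+1,c+1) \<sigma>) =
    (fz0 (a+1) (b+1) (c+1) * fz0 (a+1) b (c+1) * fz0 a (b+1) (c+1) * fz0 a b (c+1)) *
    (g0 (a+1) (b+1) c * g0 (a+1) b c * g0 a (b+1) c * g0 a b c) *
    (fy0 (a+1) (b+1) (c+1) * fy0 (a+1) (b+1) c * fy0 a (b+1) (c+1) * fy0 a (b+1) c)^2 *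
    (fx0 (a+1) (b+1) (c+1) * fx0 (a+1) (b+1) c * fx0 (a+1) b (c+1) * fx0 (a+1) b c)^2"
    using vertex_prod[where x=x and Fx="\<lambda>(p,q,r). fx0 p q r" and Fy="\<lambda>(p,q,r). fy0 p q r"
       and Fz="\<lambda>(p,q,r). fz0 p q r" and G="\<lambda>(p,q,r). g0 p q r" and a="a+1" and b="b+1" and c="c+1"]
    by (simp add: nz local0 fx0_sq fy0_sq)
  have "M * (qq a b c * qq (a+1) b c * qq a (b+1) c * qq (a+1) (b+1) c) = M"
    using coh[of "(a+1,b+1,c+1)"] unfolding S V g0_eq M_def fx0_sq[symmetric] fy0_sq[symmetric] local0(1)[symmetric]
    by (simp add: algebra_simps power2_eq_square)
  then show ?thesis using Mnz by (metis mult_cancel_left1)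
qed

lemma qq_grid: "qq a b c = qq a 0 c * qq 0 b c * qq 0 0 c"
  using grid2[of "\<lambda>a b. qq a b c"] qq_sq block by blast

definition "al b c = pot (\<lambda>t. qq 0 b t * qq 0 0 t) c"
definition "be a c = pot (\<lambda>t. qq a 0 t) c"
definition "FX a b c = al b c * fx0 a b c"
definition "FY a b c = be a c * fy0 a b c"
definition "FZ a b c = al b c * be a c * fz0 a b c"

lemma al_sq: "al b c ^ 2 = 1" unfolding al_def by (rule pot_sq) (simp add: power_mult_distrib qq_sq)
lemma be_sq: "be a c ^ 2 = 1" unfolding be_def by (rule pot_sq) (simp add: qq_sq)
lemma al_step: "al b (c+1) = al b c * (qq 0 b c * qq 0 0 c)"
  unfolding al_def by (rule pot_step) (simp add: power_mult_distrib qq_sq)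
lemma be_step: "be a (c+1) = be a c * qq a 0 c"
  unfolding be_def by (rule pot_step) (simp add: qq_sq)

lemma final:
  "FX a b c ^ 2 = sqx x (a,b,c)"
  "FY a b c ^ 2 = sqy x (a,b,c)"
  "FZ a b c ^ 2 = sqz x (a,b,c)"
  "FX a b c * FY a b c * FZ a b c = Kmin x (a,b,c)"
  "FX (a+1) b c * x(a,b,c) = FY a b c * FZ a b c + FX a b c * x(a+1,b,c)"
  "FY a (b+1) c * x(a,b,c) = FX a b c * FZ a b c + FY a b c * x(a,b+1,c)"
  "FZ a b (c+1) * x(a,b,c) = FX a b c * FY a b c + FZ a b c * x(a,b,c+1)"
proof -
  have al2: "al b c * al b c = 1" using al_sq[of b c] by (simp add: power2_eq_square)
  have be2: "be a c * be a c = 1" using be_sq[of a c] by (simp add: power2_eq_square)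
  show "FX a b c ^ 2 = sqx x (a,b,c)" unfolding FX_def power_mult_distrib al_sq fx0_sq by simp
  show "FY a b c ^ 2 = sqy x (a,b,c)" unfolding FY_def power_mult_distrib be_sq fy0_sq by simp
  show "FZ a b c ^ 2 = sqz x (a,b,c)" unfolding FZ_def power_mult_distrib al_sq be_sq local0(1) by simp
  have "FX a b c * FY a b c * FZ a b c = (al b c * al b c) * (be a c * be a c) * (fx0 a b c * fy0 a b c * fz0 a b c)"
    unfolding FX_def FY_def FZ_def by (simp add: algebra_simps)
  then show "FX a b c * FY a b c * FZ a b c = Kmin x (a,b,c)" using al2 be2 local0(2) by simp
  have "FY a b c * FZ a b c + FX a b c * x(a+1,b,c) = al b c * (be a c * be a c) * (fy0 a b c * fz0 a b c) + al b c * (fx0 a b c * x(a+1,b,c))"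
    unfolding FX_def FY_def FZ_def by (simp add: algebra_simps)
  also have "\<dots> = al b c * (fx0 (a+1) b c * x(a,b,c))" using be2 local0(3)[of a b c] by (simp add: algebra_simps)
  finally show "FX (a+1) b c * x(a,b,c) = FY a b c * FZ a b c + FX a b c * x(a+1,b,c)"
    unfolding FX_def by (simp add: algebra_simps)
  have "FX a b c * FZ a b c + FY a b c * x(a,b+1,c) = be a c * (al b c * al b c) * (fx0 a b c * fz0 a b c) + be a c * (fy0 a b c * x(a,b+1,c))"
    unfolding FX_def FY_def FZ_def by (simp add: algebra_simps)
  also have "\<dots> = be a c * (fy0 a (b+1) c * x(a,b,c))" using al2 local0(4)[of a b c] by (simp add: algebra_simps)
  finally show "FY a (b+1) c * x(a,b,c) = FX a b c * FZ a b c + FY a b c * x(a,b+1,c)"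
    unfolding FY_def by (simp add: algebra_simps)
  have q: "qq a b c = qq a 0 c * qq 0 b c * qq 0 0 c" by (rule qq_grid)
  have "FZ a b (c+1) = al b c * be a c * (qq a b c * fz0 a b (c+1))"
    unfolding FZ_def al_step be_step q by (simp add: algebra_simps)
  also have "\<dots> = al b c * be a c * g0 a b c" using g0_eq by simp
  finally have "FZ a b (c+1) * x(a,b,c) = al b c * be a c * (g0 a b c * x(a,b,c))" by simp
  also have "\<dots> = al b c * be a c * (fx0 a b c * fy0 a b c + fz0 a b c * x(a,b,c+1))" using local0(6) by simp
  also have "\<dots> = FX a b c * FY a b c + FZ a b c * x(a,b,c+1)" unfolding FX_def FY_def FZ_def by (simp add: algebra_simps)
  finally show "FZ a b (c+1) * x(a,b,c) = FX a b c * FY a b c + FZ a b c * x(a,b,c+1)" .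
qed


definition "xt v = (case v of (p,q,r) \<Rightarrow>
   if even p \<and> even q \<and> even r then x(p div 2, q div 2, r div 2)
   else if even p \<and> odd q \<and> odd r then FX (p div 2) (q div 2) (r div 2)
   else if odd p \<and> even q \<and> odd r then FY (p div 2) (q div 2) (r div 2)
   else if odd p \<and> odd q \<and> even r then FZ (p div 2) (q div 2) (r div 2)
   else 0)"

lemma xt_dbl: "xt (dbl v) = x v"
  by (cases v) (simp add: xt_def dbl_def)

lemma hexa: "K_hexahedron xt"
  unfolding K_hexahedron_def
proof (intro conjI allI impI)
  fix v show "xt (dbl v) \<noteq> 0" using nz by (cases v) (simp add: xt_dbl)
next
  fix a b c :: int assume h: "even a \<and> odd b \<and> odd c"
  then obtain p q r where "a = 2*p" "b = 2*q+1" "c = 2*r+1" by (meson evenE oddE)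
  then show "(xt (a,b,c))^2 = xt (a,b-1,c-1) * xt (a,b+1,c+1) + xt (a,b+1,c-1) * xt (a,b-1,c+1)"
    using final(1)[of p q r] by (simp add: xt_def sq_simps add.commute)
next
  fix a b c :: int assume h: "odd a \<and> even b \<and> odd c"
  then obtain p q r where "a = 2*p+1" "b = 2*q" "c = 2*r+1" by (meson evenE oddE)
  then show "(xt (a,b,c))^2 = xt (a-1,b,c-1) * xt (a+1,b,c+1) + xt (a+1,b,c-1) * xt (a-1,b,c+1)"
    using final(2)[of p q r] by (simp add: xt_def sq_simps add.commute)
next
  fix a b c :: int assume h: "odd a \<and> odd b \<and> even c"
  then obtain p q r where "a = 2*p+1" "b = 2*q+1" "c = 2*r" by (meson evenE oddE)
  then show "(xt (a,b,c))^2 = xt (a-1,b-1,c) * xt (a+1,b+1,c) + xt (a+1,b-1,c) * xt (a-1,b+1,c)"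
    using final(3)[of p q r] by (simp add: xt_def sq_simps add.commute)
next
  fix v :: pt
  obtain p q r where v: "v = (p,q,r)" by (cases v)
  have n: "x(p,q,r) \<noteq> 0" by (rule nz)
  have e1: "FX (p+1) q r = (FY p q r * FZ p q r + FX p q r * x(p+1,q,r)) / x(p,q,r)"
    using final(5)[of p q r] n by (simp add: field_simps)
  have e2: "FY p (q+1) r = (FX p q r * FZ p q r + FY p q r * x(p,q+1,r)) / x(p,q,r)"
    using final(6)[of p q r] n by (simp add: field_simps)
  have e3: "FZ p q (r+1) = (FX p q r * FY p q r + FZ p q r * x(p,q,r+1)) / x(p,q,r)"
    using final(7)[of p q r] n by (simp add: field_simps)
  have e4: "x(p+1,q+1,r+1) = (2 * x(p+1,q,r) * x(p,q+1,r) * x(p,q,r+1)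
       + x(p,q,r) * (x(p+1,q,r) * x(p,q+1,r+1) + x(p,q+1,r) * x(p+1,q,r+1) + x(p,q,r+1) * x(p+1,q+1,r))
       + 2 * FX p q r * FY p q r * FZ p q r) / x(p,q,r)^2"
    using final(4)[of p q r] n unfolding Kmin_eq kv_def by (simp add: field_simps)
  show "let z = (\<lambda>p q r. xt (shift (dbl v) (p,q,r)));
              A = 2 * z 2 0 0 * z 0 2 0 * z 0 0 2
                  + z 0 0 0 * (z 2 0 0 * z 0 2 2 + z 0 2 0 * z 2 0 2 + z 0 0 2 * z 2 2 0)
          in z 2 1 1 = (z 1 0 1 * z 1 1 0 + z 0 1 1 * z 2 0 0) / z 0 0 0 \<and>
             z 1 2 1 = (z 0 1 1 * z 1 1 0 + z 1 0 1 * z 0 2 0) / z 0 0 0 \<and>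
             z 1 1 2 = (z 0 1 1 * z 1 0 1 + z 1 1 0 * z 0 0 2) / z 0 0 0 \<and>
             z 2 2 2 = (A + 2 * z 0 1 1 * z 1 0 1 * z 1 1 0) / (z 0 0 0)^2"
    unfolding v Let_def using e1 e2 e3 e4 by (simp add: shift_def dbl_def xt_def algebra_simps)
qed

end




theorem theorem2p22:
  shows "(\<forall>x :: pt \<Rightarrow> complex.
            (\<forall>v. x v \<noteq> 0) \<and> coherent x \<and>
            (\<forall>v i j. i \<in> {1,2,3} \<and> j \<in> {1,2,3} \<and> i \<noteq> j \<longrightarrow>
               x v * x (shift (shift v (e i)) (e j)) + x (shift v (e i)) * x (shift v (e j)) \<noteq> 0)
            \<longrightarrow> (\<exists>xt :: pt \<Rightarrow> complex. (\<forall>v. xt (dbl v) = x v) \<and> K_hexahedron xt))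
       \<and> (\<forall>xt :: pt \<Rightarrow> complex.
            (\<forall>v. xt (dbl v) \<noteq> 0) \<and> K_hexahedron xt \<longrightarrow> coherent (\<lambda>v. xt (dbl v)))"
proof (intro conjI allI impI)
  fix x :: "pt \<Rightarrow> complex"
  assume H: "(\<forall>v. x v \<noteq> 0) \<and> coherent x \<and>
            (\<forall>v i j. i \<in> {1,2,3} \<and> j \<in> {1,2,3} \<and> i \<noteq> j \<longrightarrow>
               x v * x (shift (shift v (e i)) (e j)) + x (shift v (e i)) * x (shift v (e j)) \<noteq> 0)"
  have S: "x v * x (shift (shift v (e i)) (e j)) + x (shift v (e i)) * x (shift v (e j)) \<noteq> 0"
    if "i \<in> {1,2,3}" "j \<in> {1,2,3}" "i \<noteq> j" for i j v using H that by blast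
  interpret kash x
  proof
    show "\<And>p q r. x (p,q,r) \<noteq> 0" using H by blast
    show "\<And>p q r. Kcube x (p,q,r) = 0" using H unfolding coherent_def by blast
    show "\<And>v. (\<Prod>\<sigma>\<in>signs. Kvert x v \<sigma>) =
          (\<Prod>d\<in>sq_dirs. x v * x (shift (shift v (fst d)) (snd d)) + x (shift v (fst d)) * x (shift v (snd d)))"
      using H unfolding coherent_def by blast
    show "sqx x (p,q,r) \<noteq> 0" for p q r using S[of 2 3 "(p,q,r)"] by (simp add: sq_simps e_def shift_def)
    show "sqy x (p,q,r) \<noteq> 0" for p q r using S[of 1 3 "(p,q,r)"] by (simp add: sq_simps e_def shift_def)
    show "sqz x (p,q,r) \<noteq> 0" for p q r using S[of 1 2 "(p,q,r)"] by (simp add: sq_simps e_def shift_def)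
  qed
  show "\<exists>xt :: pt \<Rightarrow> complex. (\<forall>v. xt (dbl v) = x v) \<and> K_hexahedron xt"
    using xt_dbl hexa by blast
next
  fix xt :: "pt \<Rightarrow> complex"
  assume "(\<forall>v. xt (dbl v) \<noteq> 0) \<and> K_hexahedron xt"
  then show "coherent (\<lambda>v. xt (dbl v))" using partb by blast
qed


end
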